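(* Let $\lambda=\{k_1,\dots,k_q\}$ be a partition of a positive integer $k$ and let $G$ be a graph. Then $G$ is $\lambda$-choosable if and only if $G$ is $L$-colourable for every special $\lambda$-assignment $L$ of $G$.
   Context: A partition of a positive integer $k$ is a finite multiset $\lambda=\{k_1,\dots,k_q\}$ of positive integers with $k_1+\dots+k_q=k$; the $k_i$ are its parts. An assignment $L$ of a graph $G$ assigns to each vertex $v$ a set $L(v)$ of colours; a $k$-assignment has $|L(v)|=k$ for all $v$; $G$ is $L$-colourable if there is a proper colouring $f$ with $f(v)\in L(v)$ for all $v$. A $\lambda$-assignment of $G$ is a $k$-assignment $L$ such that the colour set $\bigcup_{v\in V(G)}L(v)$ can be partitioned into sets $C_1,\dots,C_q$ (colour groups) with $|L(v)\cap C_i|=k_i$ for every vertex $v$ and every $i$. $G$ is $\lambda$-choosable if $G$ is $L$-colourable for every $\lambda$-assignment $L$. A $\lambda$-assignment $L$ with colour groups $C_1,\dots,C_q$ is special if $C_i$ is a singleton for every $i$ with $k_i=1$. *)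

theory Defs
  imports Main "HOL-Library.Multiset"
begin

definition graph :: "'v set \<Rightarrow> ('v \<Rightarrow> 'v \<Rightarrow> bool) \<Rightarrow> bool" where
  "graph V E \<longleftrightarrow> finite V \<and> (\<forall>u v. E u v \<longrightarrow> u \<in> V \<and> v \<in> V)
     \<and> (\<forall>u v. E u v \<longrightarrow> E v u) \<and> (\<forall>v. \<not> E v v)"

definition is_partition :: "nat multiset \<Rightarrow> nat \<Rightarrow> bool" where
  "is_partition lam k \<longleftrightarrow> (\<forall>x \<in># lam. x > 0) \<and> sum_mset lam = k"

definition k_assignment :: "'v set \<Rightarrow> ('v \<Rightarrow> 'c set) \<Rightarrow> nat \<Rightarrow> bool" where
  "k_assignment V L k \<longleftrightarrow> (\<forall>v \<in> V. finite (L v) \<and> card (L v) = k)"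

definition L_colourable :: "'v set \<Rightarrow> ('v \<Rightarrow> 'v \<Rightarrow> bool) \<Rightarrow> ('v \<Rightarrow> 'c set) \<Rightarrow> bool" where
  "L_colourable V E L \<longleftrightarrow> (\<exists>f. (\<forall>v \<in> V. f v \<in> L v) \<and> (\<forall>u v. E u v \<longrightarrow> f u \<noteq> f v))"

(* The partition is given as the list ks = [k_1,...,k_q] (lambda = mset ks); C i is the colour
   group belonging to the part ks ! i. *)
definition colour_groups ::
  "'v set \<Rightarrow> ('v \<Rightarrow> 'c set) \<Rightarrow> nat list \<Rightarrow> (nat \<Rightarrow> 'c set) \<Rightarrow> bool" where
  "colour_groups V L ks C \<longleftrightarrow>
     (\<Union>i<length ks. C i) = (\<Union>v\<in>V. L v)
     \<and> (\<forall>i<length ks. \<forall>j<length ks. i \<noteq> j \<longrightarrow> C i \<inter> C j = {})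
     \<and> (\<forall>v\<in>V. \<forall>i<length ks. card (L v \<inter> C i) = ks ! i)"

definition lambda_assignment :: "'v set \<Rightarrow> ('v \<Rightarrow> 'c set) \<Rightarrow> nat list \<Rightarrow> bool" where
  "lambda_assignment V L ks \<longleftrightarrow> k_assignment V L (sum_list ks) \<and> (\<exists>C. colour_groups V L ks C)"

definition special_lambda_assignment :: "'v set \<Rightarrow> ('v \<Rightarrow> 'c set) \<Rightarrow> nat list \<Rightarrow> bool" where
  "special_lambda_assignment V L ks \<longleftrightarrow> k_assignment V L (sum_list ks) \<and>
     (\<exists>C. colour_groups V L ks C \<and> (\<forall>i<length ks. ks ! i = 1 \<longrightarrow> (\<exists>c. C i = {c})))"

definition lambda_choosable ::
  "'v set \<Rightarrow> ('v \<Rightarrow> 'v \<Rightarrow> bool) \<Rightarrow> nat list \<Rightarrow> 'c itself \<Rightarrow> bool" where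
  "lambda_choosable V E ks _ \<longleftrightarrow>
     (\<forall>L :: 'v \<Rightarrow> 'c set. lambda_assignment V L ks \<longrightarrow> L_colourable V E L)"

end

theory Submission
  imports Defs
begin

lemma backward:
  fixes V :: "'v set" and E :: "'v \<Rightarrow> 'v \<Rightarrow> bool" and L :: "'v \<Rightarrow> 'c set"
  assumes g: "graph V E"
    and spec: "\<forall>L :: 'v \<Rightarrow> 'c set. special_lambda_assignment V L ks \<longrightarrow> L_colourable V E L"
    and la: "lambda_assignment V L ks"
  shows "L_colourable V E L"
proof (cases "V = {}")
  case True
  then show ?thesis using g unfolding L_colourable_def graph_def by auto
next
  case False
  then obtain v0 where v0: "v0 \<in> V" by auto
  let ?n = "length ks"
  from la obtain C where ka: "k_assignment V L (sum_list ks)" and cg: "colour_groups V L ks C"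
    unfolding lambda_assignment_def by auto
  have un: "(\<Union>i<?n. C i) = (\<Union>v\<in>V. L v)"
    and dj: "\<And>i j. i < ?n \<Longrightarrow> j < ?n \<Longrightarrow> i \<noteq> j \<Longrightarrow> C i \<inter> C j = {}"
    and cd: "\<And>v i. v \<in> V \<Longrightarrow> i < ?n \<Longrightarrow> card (L v \<inter> C i) = ks ! i"
    using cg unfolding colour_groups_def by auto
  have fin: "\<And>v. v \<in> V \<Longrightarrow> finite (L v)" and ck: "\<And>v. v \<in> V \<Longrightarrow> card (L v) = sum_list ks"
    using ka unfolding k_assignment_def by auto
  define S where "S i \<longleftrightarrow> i < ?n \<and> ks ! i = 1" for i
  define c where "c i = (SOME x. x \<in> C i)" for i
  have cin: "c i \<in> C i" if "S i" for i
  proof -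
    have "card (L v0 \<inter> C i) = 1" using cd[OF v0] that S_def by auto
    then have "C i \<noteq> {}" by auto
    then show ?thesis unfolding c_def by (simp add: some_in_eq)
  qed
  have single: "\<And>v i x y. v \<in> V \<Longrightarrow> S i \<Longrightarrow> x \<in> L v \<inter> C i \<Longrightarrow> y \<in> L v \<inter> C i \<Longrightarrow> x = y"
  proof -
    fix v i x y assume "v \<in> V" "S i" "x \<in> L v \<inter> C i" "y \<in> L v \<inter> C i"
    then have "card (L v \<inter> C i) = 1" using cd S_def by auto
    then obtain z where "L v \<inter> C i = {z}" using card_1_singletonE by blast
    then show "x = y" using \<open>x \<in> L v \<inter> C i\<close> \<open>y \<in> L v \<inter> C i\<close> by auto
  qed
  define phi where "phi x = (if \<exists>i. S i \<and> x \<in> C i then c (SOME i. S i \<and> x \<in> C i) else x)" for x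
  have phiS: "phi x = c i" if "S i" "x \<in> C i" for x i
  proof -
    have ex: "\<exists>i. S i \<and> x \<in> C i" using that by auto
    have "S (SOME i. S i \<and> x \<in> C i) \<and> x \<in> C (SOME i. S i \<and> x \<in> C i)"
      using someI_ex[OF ex] .
    moreover have "\<And>j. S j \<Longrightarrow> x \<in> C j \<Longrightarrow> j = i" using dj that S_def by blast
    ultimately have "(SOME i. S i \<and> x \<in> C i) = i" by blast
    then show ?thesis unfolding phi_def using ex by simp
  qed
  have phiN: "phi x = x" if "\<not> (\<exists>i. S i \<and> x \<in> C i)" for x
    unfolding phi_def using that by (rule if_not_P)
  have phiC: "phi x \<in> C i \<longleftrightarrow> x \<in> C i" if "i < ?n" "x \<in> C j" "j < ?n" for x i j
  proof (cases "\<exists>i. S i \<and> x \<in> C i")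
    case True
    then obtain l where l: "S l" "x \<in> C l" by auto
    then have "phi x = c l" by (rule phiS)
    have "c l \<in> C l" using cin l(1) by blast
    have ln: "l < ?n" using l(1) unfolding S_def by simp
    show ?thesis
    proof (cases "i = l")
      case True
      have "phi x \<in> C i" using \<open>phi x = c l\<close> \<open>c l \<in> C l\<close> True by (simp only:)
      moreover have "x \<in> C i" using l(2) True by (simp only:)
      ultimately show ?thesis by blast
    next
      case False
      have d: "C i \<inter> C l = {}" using dj[OF that(1) ln False] .
      have "phi x \<notin> C i" using d \<open>phi x = c l\<close> \<open>c l \<in> C l\<close> by auto
      moreover have "x \<notin> C i" using d l(2) by auto
      ultimately show ?thesis by auto
    qed
  next
    case False
    have "phi x = x" using phiN[OF False] .
    then show ?thesis by simp
  qed
  have uniq: "l = i" if "S l" "i < ?n" "x \<in> C l" "x \<in> C i" for l i x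
  proof (rule ccontr)
    assume ne: "l \<noteq> i"
    have "l < ?n" using that(1) unfolding S_def by simp
    then have "C l \<inter> C i = {}" using dj that(2) ne by blast
    then show False using that(3,4) by blast
  qed
  have inU: "\<exists>i. i < ?n \<and> x \<in> C i" if "x \<in> L v" "v \<in> V" for x v
  proof -
    have "x \<in> (\<Union>v\<in>V. L v)" using that by blast
    then have "x \<in> (\<Union>i<?n. C i)" using un by simp
    then show ?thesis by blast
  qed
  have inj: "inj_on phi (L v)" if vV: "v \<in> V" for v
  proof
    fix x y assume x: "x \<in> L v" and y: "y \<in> L v" and e: "phi x = phi y"
    obtain i where i: "i < ?n" "x \<in> C i" using inU[OF x vV] by blast
    obtain j where j: "j < ?n" "y \<in> C j" using inU[OF y vV] by blast
    have "phi x \<in> C i" using phiC[OF i(1) i(2) i(1)] i(2) by (rule iffD2)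
    then have "phi y \<in> C i" using e by (simp only:)
    then have yi: "y \<in> C i" using phiC[OF i(1) j(2) j(1)] by (rule iffD1[rotated])
    show "x = y"
    proof (cases "S i")
      case True
      show ?thesis using single[OF vV True, of x y] x y i(2) yi by blast
    next
      case False
      have nx: "\<not> (\<exists>l. S l \<and> x \<in> C l)"
      proof
        assume "\<exists>l. S l \<and> x \<in> C l"
        then obtain l where "S l" "x \<in> C l" by blast
        then have "l = i" using uniq i by blast
        then show False using False \<open>S l\<close> by (simp only:)
      qed
      have ny: "\<not> (\<exists>l. S l \<and> y \<in> C l)"
      proof
        assume "\<exists>l. S l \<and> y \<in> C l"
        then obtain l where "S l" "y \<in> C l" by blast
        then have "l = i" using uniq i(1) yi by blast
        then show False using False \<open>S l\<close> by (simp only:)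
      qed
      have "x = phi x" using phiN[OF nx] by (rule sym)
      also have "\<dots> = phi y" by (rule e)
      also have "\<dots> = y" using phiN[OF ny] .
      finally show ?thesis .
    qed
  qed
  define L' where "L' v = phi ` L v" for v
  define C' where "C' i = phi ` C i" for i
  have "special_lambda_assignment V L' ks"
    unfolding special_lambda_assignment_def
  proof (intro conjI exI)
    show "k_assignment V L' (sum_list ks)"
      unfolding k_assignment_def L'_def using fin ck inj by (simp add: card_image)
    show "colour_groups V L' ks C'"
      unfolding colour_groups_def
    proof (intro conjI ballI allI impI)
      show "(\<Union>i<?n. C' i) = (\<Union>v\<in>V. L' v)"
      proof -
        have "phi ` (\<Union>i<?n. C i) = phi ` (\<Union>v\<in>V. L v)" using un by simp
        then show ?thesis by (simp add: image_UN C'_def L'_def)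
      qed
    next
      fix i j assume ij: "i < ?n" "j < ?n" "i \<noteq> j"
      show "C' i \<inter> C' j = {}"
      proof (rule ccontr)
        assume "C' i \<inter> C' j \<noteq> {}"
        then obtain x y where x: "x \<in> C i" and y: "y \<in> C j" and e: "phi x = phi y"
          unfolding C'_def by auto
        have "phi x \<in> C i" using phiC[OF ij(1) x ij(1)] x by simp
        then have "phi y \<in> C i" using e by simp
        then have "y \<in> C i" using phiC[OF ij(1) y ij(2)] by simp
        then show False using dj[OF ij] y by auto
      qed
    next
      fix v i assume v: "v \<in> V" and i: "i < ?n"
      have "L' v \<inter> C' i = phi ` (L v \<inter> C i)"
      proof
        show "L' v \<inter> C' i \<subseteq> phi ` (L v \<inter> C i)"
        proof
          fix z assume "z \<in> L' v \<inter> C' i"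
          then obtain x y where x: "x \<in> L v" "z = phi x" and y: "y \<in> C i" "z = phi y"
            unfolding L'_def C'_def by auto
          obtain j where j: "j < ?n" "x \<in> C j" using inU[OF x(1) v] by blast
          have "phi y \<in> C i" using phiC[OF i y(1) i] y(1) by simp
          then have "x \<in> C i" using phiC[OF i j(2) j(1)] x y by simp
          then show "z \<in> phi ` (L v \<inter> C i)" using x by auto
        qed
        show "phi ` (L v \<inter> C i) \<subseteq> L' v \<inter> C' i" unfolding L'_def C'_def by auto
      qed
      then have "card (L' v \<inter> C' i) = card (L v \<inter> C i)"
        using inj[OF v] by (simp add: card_image inj_on_subset)
      then show "card (L' v \<inter> C' i) = ks ! i" using cd[OF v i] by simp
    qed
  next
    show "\<forall>i<?n. ks ! i = 1 \<longrightarrow> (\<exists>x. C' i = {x})"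
    proof (intro allI impI)
      fix i assume i: "i < ?n" and one: "ks ! i = 1"
      have Si: "S i" using i one S_def by simp
      have "C' i = {c i}" unfolding C'_def using phiS[OF Si] cin[OF Si] by auto
      then show "\<exists>x. C' i = {x}" by blast
    qed
  qed
  then have "L_colourable V E L'" using spec by blast
  then obtain f' where f1: "\<forall>v\<in>V. f' v \<in> L' v" and f2: "\<forall>u v. E u v \<longrightarrow> f' u \<noteq> f' v"
    unfolding L_colourable_def by blast
  define f where "f v = (SOME x. x \<in> L v \<and> phi x = f' v)" for v
  have fp: "f v \<in> L v \<and> phi (f v) = f' v" if "v \<in> V" for v
  proof -
    have "\<exists>x. x \<in> L v \<and> phi x = f' v" using f1 that unfolding L'_def by (metis imageE)
    then show ?thesis unfolding f_def by (rule someI_ex)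
  qed
  have "\<forall>u v. E u v \<longrightarrow> f u \<noteq> f v"
  proof (intro allI impI)
    fix u v assume e: "E u v"
    then have "u \<in> V" "v \<in> V" using g unfolding graph_def by auto
    then have "phi (f u) = f' u" "phi (f v) = f' v" using fp by blast+
    moreover have "f' u \<noteq> f' v" using f2 e by blast
    ultimately show "f u \<noteq> f v" by metis
  qed
  then show ?thesis unfolding L_colourable_def using fp by blast
qed

theorem lemma1:
  fixes V :: "'v set" and E :: "'v \<Rightarrow> 'v \<Rightarrow> bool"
    and lam :: "nat multiset" and ks :: "nat list" and k :: nat
  assumes "graph V E"
    and "k > 0" and "is_partition lam k" and "lam = mset ks"
  shows "lambda_choosable V E ks TYPE('c) \<longleftrightarrow>
         (\<forall>L :: 'v \<Rightarrow> 'c set. special_lambda_assignment V L ks \<longrightarrow> L_colourable V E L)"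
proof
  assume "lambda_choosable V E ks TYPE('c)"
  then show "\<forall>L :: 'v \<Rightarrow> 'c set. special_lambda_assignment V L ks \<longrightarrow> L_colourable V E L"
    unfolding lambda_choosable_def special_lambda_assignment_def lambda_assignment_def by blast
next
  assume "\<forall>L :: 'v \<Rightarrow> 'c set. special_lambda_assignment V L ks \<longrightarrow> L_colourable V E L"
  then show "lambda_choosable V E ks TYPE('c)"
    unfolding lambda_choosable_def using backward[OF assms(1)] by blast
qed

end
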